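(* Let $G$ be a simplicial group and $\tilde G$ its dummy. Then the geometric realization $|\tilde G|$ is contractible.
   Context: Let $B$ be the cosimplicial simplicial pointed set with $B^n_m$ the set of non-strictly increasing partial maps $b\colon[m]\dashrightarrow[n]$ (with domain $\operatorname{dom}b\subset[m]$), marked element $o^n_m$ the map with empty domain; the simplicial structure in $m$ is given by precomposition (for $\theta\colon[m']\to[m]$, $b\mapsto b\circ\theta$ with domain $\theta^{-1}(\operatorname{dom}b)$) and the cosimplicial structure in $n$ by postcomposition. The dummy $\tilde G$ is the simplicial group with $\tilde G_n$ the group (under pointwise multiplication) of base-point-preserving simplicial maps $B^n\to G$ (the marked elements going to $1$), with structure homomorphisms induced by the cosimplicial structure of $B$. *)

theory Defs
  imports "HOL-Analysis.Analysis" "HOL-Homology.Homology" "HOL-Algebra.Group"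
begin

definition mono_maps :: "nat \<Rightarrow> nat \<Rightarrow> (nat \<Rightarrow> nat) set" where
  "mono_maps m n = {\<theta>. \<theta> \<in> {..m} \<rightarrow>\<^sub>E {..n} \<and> mono_on {..m} \<theta>}"

definition id_map :: "nat \<Rightarrow> nat \<Rightarrow> nat" where
  "id_map n = restrict id {..n}"

definition simplicial_set ::
  "(nat \<Rightarrow> 'x set) \<Rightarrow> (nat \<Rightarrow> nat \<Rightarrow> (nat \<Rightarrow> nat) \<Rightarrow> 'x \<Rightarrow> 'x) \<Rightarrow> bool" where
  "simplicial_set X act \<longleftrightarrow>
     (\<forall>m n \<theta> x. \<theta> \<in> mono_maps m n \<longrightarrow> x \<in> X n \<longrightarrow> act m n \<theta> x \<in> X m) \<and>
     (\<forall>n x. x \<in> X n \<longrightarrow> act n n (id_map n) x = x) \<and>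
     (\<forall>k m n \<psi> \<theta> x. \<psi> \<in> mono_maps k m \<longrightarrow> \<theta> \<in> mono_maps m n \<longrightarrow> x \<in> X n \<longrightarrow>
        act k m \<psi> (act m n \<theta> x) = act k n (compose {..k} \<theta> \<psi>) x)"

definition simplicial_group ::
  "(nat \<Rightarrow> 'g monoid) \<Rightarrow> (nat \<Rightarrow> nat \<Rightarrow> (nat \<Rightarrow> nat) \<Rightarrow> 'g \<Rightarrow> 'g) \<Rightarrow> bool" where
  "simplicial_group Gr act \<longleftrightarrow>
     simplicial_set (\<lambda>n. carrier (Gr n)) act \<and>
     (\<forall>n. group (Gr n)) \<and>
     (\<forall>m n \<theta>. \<theta> \<in> mono_maps m n \<longrightarrow> act m n \<theta> \<in> hom (Gr n) (Gr m))"

text \<open>B n m: non-strictly increasing partial maps [m] \<rightharpoonup> [n].\<close>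
definition Bset :: "nat \<Rightarrow> nat \<Rightarrow> (nat \<Rightarrow> nat option) set" where
  "Bset n m = {b. (\<forall>i k. b i = Some k \<longrightarrow> i \<le> m \<and> k \<le> n) \<and>
                  (\<forall>i j k l. i \<le> j \<longrightarrow> b i = Some k \<longrightarrow> b j = Some l \<longrightarrow> k \<le> l)}"

text \<open>The marked element: the map with empty domain.\<close>
definition Bmark :: "nat \<Rightarrow> nat option" where
  "Bmark = (\<lambda>_. None)"

text \<open>Simplicial structure: precomposition with \<theta> : [m'] \<rightarrow> [m].\<close>
definition Bprecomp :: "nat \<Rightarrow> (nat \<Rightarrow> nat option) \<Rightarrow> (nat \<Rightarrow> nat) \<Rightarrow> nat \<Rightarrow> nat option" where
  "Bprecomp m' b \<theta> = (\<lambda>i. if i \<le> m' then b (\<theta> i) else None)"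

text \<open>Cosimplicial structure: postcomposition with \<psi> : [n] \<rightarrow> [n'].\<close>
definition Bpostcomp :: "(nat \<Rightarrow> nat) \<Rightarrow> (nat \<Rightarrow> nat option) \<Rightarrow> nat \<Rightarrow> nat option" where
  "Bpostcomp \<psi> b = (\<lambda>i. map_option \<psi> (b i))"

text \<open>n-simplices of the dummy: base-point-preserving simplicial maps B^n \<rightarrow> G,
  given by their components f m : B n m \<rightarrow> G m (extensional).\<close>
definition dummy_simplices ::
  "(nat \<Rightarrow> 'g monoid) \<Rightarrow> (nat \<Rightarrow> nat \<Rightarrow> (nat \<Rightarrow> nat) \<Rightarrow> 'g \<Rightarrow> 'g) \<Rightarrow> nat
     \<Rightarrow> (nat \<Rightarrow> (nat \<Rightarrow> nat option) \<Rightarrow> 'g) set" where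
  "dummy_simplices Gr act n =
     {f. (\<forall>m. \<forall>b \<in> Bset n m. f m b \<in> carrier (Gr m)) \<and>
         (\<forall>m b. b \<notin> Bset n m \<longrightarrow> f m b = undefined) \<and>
         (\<forall>m. f m Bmark = \<one>\<^bsub>Gr m\<^esub>) \<and>
         (\<forall>m' m \<theta> b. \<theta> \<in> mono_maps m' m \<longrightarrow> b \<in> Bset n m \<longrightarrow>
             f m' (Bprecomp m' b \<theta>) = act m' m \<theta> (f m b))}"

text \<open>Structure maps of the dummy, induced by the cosimplicial structure of B:
  for \<psi> : [n'] \<rightarrow> [n], f \<mapsto> f \<circ> \<psi>_*.\<close>
definition dummy_act ::
  "nat \<Rightarrow> nat \<Rightarrow> (nat \<Rightarrow> nat) \<Rightarrow> (nat \<Rightarrow> (nat \<Rightarrow> nat option) \<Rightarrow> 'g)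
     \<Rightarrow> (nat \<Rightarrow> (nat \<Rightarrow> nat option) \<Rightarrow> 'g)" where
  "dummy_act n' n \<psi> f = (\<lambda>m b. if b \<in> Bset n' m then f m (Bpostcomp \<psi> b) else undefined)"

definition quotient_topology :: "'a topology \<Rightarrow> ('a \<Rightarrow> 'b) \<Rightarrow> 'b topology" where
  "quotient_topology X f =
     topology (\<lambda>U. U \<subseteq> f ` topspace X \<and> openin X {x \<in> topspace X. f x \<in> U})"

lemma istopology_quotient_topology:
  "istopology (\<lambda>U. U \<subseteq> f ` topspace X \<and> openin X {x \<in> topspace X. f x \<in> U})"
proof -
  have 1: "{x \<in> topspace X. f x \<in> S \<inter> T} = {x \<in> topspace X. f x \<in> S} \<inter> {x \<in> topspace X. f x \<in> T}" for S T
    by auto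
  have 2: "{x \<in> topspace X. f x \<in> \<Union>K} = (\<Union>U\<in>K. {x \<in> topspace X. f x \<in> U})" for K
    by auto
  show ?thesis
    unfolding istopology_def 1 2 by blast
qed

text \<open>Covariant action of \<theta> : [m] \<rightarrow> [n] on standard simplices \<Delta>^m \<rightarrow> \<Delta>^n.\<close>
definition simplex_push :: "nat \<Rightarrow> (nat \<Rightarrow> nat) \<Rightarrow> (nat \<Rightarrow> real) \<Rightarrow> nat \<Rightarrow> real" where
  "simplex_push m \<theta> t = (\<lambda>j. \<Sum>i \<in> {i. i \<le> m \<and> \<theta> i = j}. t i)"

definition realization_pre ::
  "(nat \<Rightarrow> 'x set) \<Rightarrow> (nat \<times> ('x \<times> (nat \<Rightarrow> real))) topology" where
  "realization_pre X = sum_topology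
     (\<lambda>n. prod_topology (discrete_topology (X n))
                        (subtopology (powertop_real UNIV) (standard_simplex n))) UNIV"

definition realization_rel ::
  "(nat \<Rightarrow> 'x set) \<Rightarrow> (nat \<Rightarrow> nat \<Rightarrow> (nat \<Rightarrow> nat) \<Rightarrow> 'x \<Rightarrow> 'x)
    \<Rightarrow> nat \<times> ('x \<times> (nat \<Rightarrow> real)) \<Rightarrow> nat \<times> ('x \<times> (nat \<Rightarrow> real)) \<Rightarrow> bool" where
  "realization_rel X act p q \<longleftrightarrow>
     (\<exists>m n \<theta> x t. \<theta> \<in> mono_maps m n \<and> x \<in> X n \<and> t \<in> standard_simplex m \<and>
        p = (m, act m n \<theta> x, t) \<and> q = (n, x, simplex_push m \<theta> t))"

text \<open>Geometric realization |X|: the quotient of the disjoint union by the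
  equivalence relation generated by realization_rel; points are equivalence classes.\<close>
definition realization ::
  "(nat \<Rightarrow> 'x set) \<Rightarrow> (nat \<Rightarrow> nat \<Rightarrow> (nat \<Rightarrow> nat) \<Rightarrow> 'x \<Rightarrow> 'x)
    \<Rightarrow> (nat \<times> ('x \<times> (nat \<Rightarrow> real))) set topology" where
  "realization X act = quotient_topology (realization_pre X)
     (\<lambda>p. {q \<in> topspace (realization_pre X). equivclp (realization_rel X act) p q})"

end

theory Submission
  imports Defs
begin

definition Bsh :: "(nat \<Rightarrow> nat option) \<Rightarrow> nat \<Rightarrow> nat option" where
 "Bsh b = (\<lambda>i. case b i of None \<Rightarrow> None | Some k \<Rightarrow> (if k = 0 then None else Some (k - 1)))"

lemma Bsh_Some: "Bsh b i = Some k \<longleftrightarrow> b i = Some (Suc k)"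
  by (auto simp: Bsh_def split: option.splits)

lemma Bset_iff: "b \<in> Bset n m \<longleftrightarrow> (\<forall>i k. b i = Some k \<longrightarrow> i \<le> m \<and> k \<le> n) \<and>
                  (\<forall>i j k l. i \<le> j \<longrightarrow> b i = Some k \<longrightarrow> b j = Some l \<longrightarrow> k \<le> l)"
  by (simp add: Bset_def)

lemma Bsh_Bset: "b \<in> Bset (Suc n) m \<Longrightarrow> Bsh b \<in> Bset n m"
  unfolding Bset_iff Bsh_Some
  by fastforce

lemma Bsh_Bmark[simp]: "Bsh Bmark = Bmark"
  by (simp add: Bsh_def Bmark_def)

lemma Bmark_Bset[simp]: "Bmark \<in> Bset n m"
  by (simp add: Bset_def Bmark_def)

definition Eext :: "nat \<Rightarrow> (nat \<Rightarrow> (nat \<Rightarrow> nat option) \<Rightarrow> 'g) \<Rightarrow> (nat \<Rightarrow> (nat \<Rightarrow> nat option) \<Rightarrow> 'g)" where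
 "Eext n f = (\<lambda>m b. if b \<in> Bset (Suc n) m then f m (Bsh b) else undefined)"

definition liftm :: "nat \<Rightarrow> (nat \<Rightarrow> nat) \<Rightarrow> nat \<Rightarrow> nat" where
 "liftm m \<theta> = (\<lambda>i. if i \<le> Suc m then (if i = 0 then 0 else Suc (\<theta> (i - 1))) else undefined)"

definition cst :: "real \<Rightarrow> (nat \<Rightarrow> real) \<Rightarrow> nat \<Rightarrow> real" where
 "cst s t = (\<lambda>j. if j = 0 then s else (1 - s) * t (j - 1))"

definition face0 :: "nat \<Rightarrow> nat \<Rightarrow> nat" where
 "face0 n = (\<lambda>i. if i \<le> n then Suc i else undefined)"

definition vert0 :: "nat \<Rightarrow> nat" where
 "vert0 = (\<lambda>i. if i \<le> 0 then 0 else undefined)"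

lemma Bsh_precomp: "Bsh (Bprecomp m' b \<theta>) = Bprecomp m' (Bsh b) \<theta>"
  by (auto simp: Bsh_def Bprecomp_def fun_eq_iff)

lemma mono_mapsD:
  assumes "\<theta> \<in> mono_maps m n"
  shows "\<And>i. i \<le> m \<Longrightarrow> \<theta> i \<le> n" "\<And>i j. i \<le> j \<Longrightarrow> j \<le> m \<Longrightarrow> \<theta> i \<le> \<theta> j"
  using assms unfolding mono_maps_def
   apply (auto dest!: PiE_mem)
  by (meson atMost_iff le_trans mono_onD)

lemma Bprecomp_Bset:
  assumes "b \<in> Bset n m" "\<theta> \<in> mono_maps m' m"
  shows "Bprecomp m' b \<theta> \<in> Bset n m'"
  using assms(1) mono_mapsD[OF assms(2)] unfolding Bset_iff Bprecomp_def
  by (auto split: if_splits) (meson le_trans)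

lemma Bpostcomp_Some: "Bpostcomp \<theta> b i = Some k \<longleftrightarrow> (\<exists>k'. b i = Some k' \<and> k = \<theta> k')"
  by (auto simp: Bpostcomp_def)

lemma Bpostcomp_Bset:
  assumes "b \<in> Bset m k" "\<theta> \<in> mono_maps m n"
  shows "Bpostcomp \<theta> b \<in> Bset n k"
  using assms(1) mono_mapsD[OF assms(2)] unfolding Bset_iff Bpostcomp_Some
  by blast

lemma Eext_in:
  assumes "f \<in> dummy_simplices Gr act n"
  shows "Eext n f \<in> dummy_simplices Gr act (Suc n)"
  using assms unfolding dummy_simplices_def Eext_def
  by (auto simp: Bsh_Bset Bsh_precomp Bprecomp_Bset)

lemma liftm_mono:
  assumes "\<theta> \<in> mono_maps m n"
  shows "liftm m \<theta> \<in> mono_maps (Suc m) (Suc n)"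
proof -
  note d = mono_mapsD[OF assms]
  have "liftm m \<theta> \<in> {..Suc m} \<rightarrow>\<^sub>E {..Suc n}"
    using d(1) by (auto simp: liftm_def PiE_def extensional_def)
  moreover have "mono_on {..Suc m} (liftm m \<theta>)"
  proof (rule mono_onI)
    fix i j assume "i \<in> {..Suc m}" "j \<in> {..Suc m}" "i \<le> j"
    then show "liftm m \<theta> i \<le> liftm m \<theta> j"
      using d(2)[of "i - 1" "j - 1"] by (auto simp: liftm_def)
  qed
  ultimately show ?thesis by (simp add: mono_maps_def)
qed

lemma Bsh_post_lift:
  assumes "b \<in> Bset (Suc m) k"
  shows "Bsh (Bpostcomp (liftm m \<theta>) b) = Bpostcomp \<theta> (Bsh b)"
proof (rule ext)
  fix i
  show "Bsh (Bpostcomp (liftm m \<theta>) b) i = Bpostcomp \<theta> (Bsh b) i"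
  proof (cases "b i")
    case None then show ?thesis by (simp add: Bsh_def Bpostcomp_def)
  next
    case (Some v)
    then have "v \<le> Suc m" using assms by (auto simp: Bset_iff)
    then show ?thesis using Some by (simp add: Bsh_def Bpostcomp_def liftm_def)
  qed
qed

lemma act_Eext:
  assumes "\<theta> \<in> mono_maps m n"
  shows "Eext m (dummy_act m n \<theta> x) = dummy_act (Suc m) (Suc n) (liftm m \<theta>) (Eext n x)"
proof (intro ext)
  fix k b
  show "Eext m (dummy_act m n \<theta> x) k b = dummy_act (Suc m) (Suc n) (liftm m \<theta>) (Eext n x) k b"
  proof (cases "b \<in> Bset (Suc m) k")
    case True
    then show ?thesis
      using Bsh_Bset[OF True] Bpostcomp_Bset[OF True liftm_mono[OF assms]] Bsh_post_lift[OF True]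
      by (simp add: Eext_def dummy_act_def)
  next
    case False then show ?thesis by (simp add: Eext_def dummy_act_def)
  qed
qed

lemma cst_simplex:
  assumes "t \<in> standard_simplex m" "0 \<le> s" "s \<le> 1"
  shows "cst s t \<in> standard_simplex (Suc m)"
proof -
  have t: "\<And>i. 0 \<le> t i \<and> t i \<le> 1" "\<And>i. i > m \<Longrightarrow> t i = 0" "(\<Sum>i\<le>m. t i) = 1"
    using assms(1) by (auto simp: standard_simplex_def)
  have "(\<Sum>i\<le>Suc m. cst s t i) = s + (\<Sum>i\<le>m. (1 - s) * t i)"
    by (simp only: sum.atMost_Suc_shift) (simp add: cst_def)
  also have "\<dots> = 1" by (simp add: sum_distrib_left[symmetric] t(3))
  finally show ?thesis
    using t assms(2,3) unfolding standard_simplex_def cst_def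
    by (auto simp: mult_le_one)
qed

lemma push_lift:
  "simplex_push (Suc m) (liftm m \<theta>) (cst s t) = cst s (simplex_push m \<theta> t)"
proof (rule ext)
  fix j
  show "simplex_push (Suc m) (liftm m \<theta>) (cst s t) j = cst s (simplex_push m \<theta> t) j"
  proof (cases j)
    case 0
    have "{i. i \<le> Suc m \<and> liftm m \<theta> i = 0} = {0}" by (auto simp: liftm_def)
    then show ?thesis using 0 by (simp add: simplex_push_def cst_def)
  next
    case (Suc j')
    have e: "{i. i \<le> Suc m \<and> liftm m \<theta> i = Suc j'} = Suc ` {i. i \<le> m \<and> \<theta> i = j'}"
      by (auto simp: liftm_def image_iff) (metis Suc_pred diff_Suc_1 not_less_eq_eq le0 not_less0 Suc_le_mono)+
    show ?thesis using Suc
      by (simp add: simplex_push_def e sum.reindex cst_def sum_distrib_left)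
  qed
qed

lemma face0_mono: "face0 n \<in> mono_maps n (Suc n)"
  by (auto simp: mono_maps_def face0_def mono_on_def PiE_def extensional_def)

lemma vert0_mono: "vert0 \<in> mono_maps 0 n"
  by (auto simp: mono_maps_def vert0_def mono_on_def PiE_def extensional_def)

lemma face0_act:
  assumes "x \<in> dummy_simplices Gr act n"
  shows "dummy_act n (Suc n) (face0 n) (Eext n x) = x"
proof -
  have h1: "\<And>m b. b \<in> Bset n m \<Longrightarrow> Bsh (Bpostcomp (face0 n) b) = b"
    by (auto simp: Bset_def Bsh_def Bpostcomp_def face0_def fun_eq_iff split: option.splits)
  have h2: "\<And>m b. b \<notin> Bset n m \<Longrightarrow> x m b = undefined"
    using assms by (simp add: dummy_simplices_def)
  show ?thesis
  proof (intro ext)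
    fix m b
    show "dummy_act n (Suc n) (face0 n) (Eext n x) m b = x m b"
    proof (cases "b \<in> Bset n m")
      case True
      then show ?thesis using h1[OF True]
        by (simp add: dummy_act_def Eext_def Bpostcomp_Bset[OF True face0_mono])
    next
      case False
      then show ?thesis using h2[OF False] by (simp add: dummy_act_def)
    qed
  qed
qed

lemma push_face0:
  assumes "t \<in> standard_simplex n"
  shows "simplex_push n (face0 n) t = cst 0 t"
proof (rule ext)
  fix j
  show "simplex_push n (face0 n) t j = cst 0 t j"
  proof (cases j)
    case 0
    then show ?thesis by (simp add: simplex_push_def cst_def face0_def)
  next
    case (Suc j')
    have e: "{i. i \<le> n \<and> face0 n i = Suc j'} = (if j' \<le> n then {j'} else {})"
      by (auto simp: face0_def)
    show ?thesis using Suc assms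
      by (auto simp: simplex_push_def e cst_def standard_simplex_def)
  qed
qed

definition cpt :: "(nat \<Rightarrow> 'g monoid) \<Rightarrow> nat \<Rightarrow> (nat \<Rightarrow> nat option) \<Rightarrow> 'g" where
  "cpt Gr = (\<lambda>m b. if b \<in> Bset 0 m then \<one>\<^bsub>Gr m\<^esub> else undefined)"

definition e0 :: "nat \<Rightarrow> real" where
  "e0 = (\<lambda>i. if i = 0 then 1 else 0)"

lemma vert0_act:
  assumes "x \<in> dummy_simplices Gr act n"
  shows "dummy_act 0 (Suc n) vert0 (Eext n x) = cpt Gr"
proof -
  have h1: "\<And>m b. b \<in> Bset 0 m \<Longrightarrow> Bsh (Bpostcomp vert0 b) = Bmark"
    by (auto simp: Bset_def Bsh_def Bpostcomp_def vert0_def fun_eq_iff Bmark_def split: option.splits)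
  have h2: "\<And>m. x m Bmark = \<one>\<^bsub>Gr m\<^esub>"
    using assms by (simp add: dummy_simplices_def)
  show ?thesis
  proof (intro ext)
    fix m b
    show "dummy_act 0 (Suc n) vert0 (Eext n x) m b = cpt Gr m b"
    proof (cases "b \<in> Bset 0 m")
      case True
      then show ?thesis using h1[OF True] h2
        by (simp add: dummy_act_def Eext_def Bpostcomp_Bset[OF True vert0_mono] cpt_def)
    next
      case False
      then show ?thesis by (simp add: dummy_act_def cpt_def)
    qed
  qed
qed

lemma push_vert0: "simplex_push 0 vert0 e0 = cst 1 t"
proof (rule ext)
  fix j
  have e: "{i. i \<le> 0 \<and> vert0 i = j} = (if j = 0 then {0} else {})"
    by (auto simp: vert0_def)
  show "simplex_push 0 vert0 e0 j = cst 1 t j"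
    unfolding simplex_push_def by (simp only: e) (simp add: cst_def e0_def)
qed

lemma e0_simplex: "e0 \<in> standard_simplex 0"
  by (simp add: standard_simplex_def e0_def)

lemma qt_openin:
  "openin (quotient_topology X f) U \<longleftrightarrow> U \<subseteq> f ` topspace X \<and> openin X {x \<in> topspace X. f x \<in> U}"
  unfolding quotient_topology_def topology_inverse'[OF istopology_quotient_topology] by simp

lemma qt_topspace: "topspace (quotient_topology X f) = f ` topspace X"
proof
  show "topspace (quotient_topology X f) \<subseteq> f ` topspace X"
    using qt_openin[of X f "topspace (quotient_topology X f)"] by simp
  have e: "{x \<in> topspace X. f x \<in> f ` topspace X} = topspace X" by auto
  have "openin (quotient_topology X f) (f ` topspace X)"
    unfolding qt_openin e by auto
  then show "f ` topspace X \<subseteq> topspace (quotient_topology X f)"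
    by (rule openin_subset)
qed

lemma quotient_map_qt: "quotient_map X (quotient_topology X f) f"
  unfolding quotient_map_def qt_topspace
  by (auto simp: qt_openin)

lemma cont_prod_sum:
  assumes cont: "\<And>i. i \<in> I \<Longrightarrow> continuous_map (prod_topology Z (Y i)) W (\<lambda>zy. f (fst zy, (i, snd zy)))"
  shows "continuous_map (prod_topology Z (sum_topology Y I)) W f"
  unfolding continuous_map_def
proof (intro conjI allI impI)
  show "f \<in> topspace (prod_topology Z (sum_topology Y I)) \<rightarrow> topspace W"
  proof
    fix x assume "x \<in> topspace (prod_topology Z (sum_topology Y I))"
    then obtain z i y where x: "x = (z, (i, y))" "z \<in> topspace Z" "i \<in> I" "y \<in> topspace (Y i)"
      by auto
    have "(z, y) \<in> topspace (prod_topology Z (Y i))" using x by simp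
    have "(\<lambda>zy. f (fst zy, (i, snd zy))) (z, y) \<in> topspace W"
      by (rule funcset_mem[OF continuous_map_funspace[OF cont[OF x(3)]] \<open>(z, y) \<in> _\<close>])
    then show "f x \<in> topspace W" using x(1) by simp
  qed
next
  fix U assume U: "openin W U"
  show "openin (prod_topology Z (sum_topology Y I)) {x \<in> topspace (prod_topology Z (sum_topology Y I)). f x \<in> U}"
    unfolding openin_prod_topology_alt
  proof (intro allI impI)
    fix z p assume zp: "(z, p) \<in> {x \<in> topspace (prod_topology Z (sum_topology Y I)). f x \<in> U}"
    then obtain i y where p: "p = (i, y)" "i \<in> I" "y \<in> topspace (Y i)" "z \<in> topspace Z"
      by auto
    have o: "openin (prod_topology Z (Y i)) {x \<in> topspace (prod_topology Z (Y i)). f (fst x, (i, snd x)) \<in> U}"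
      using cont[OF p(2)] U by (simp add: continuous_map_def)
    define S where "S = {x \<in> topspace (prod_topology Z (Y i)). f (fst x, (i, snd x)) \<in> U}"
    have zy: "(z, y) \<in> S"
      using zp p unfolding S_def by auto
    have "\<forall>x y. (x, y) \<in> S \<longrightarrow> (\<exists>U V. openin Z U \<and> openin (Y i) V \<and> x \<in> U \<and> y \<in> V \<and> U \<times> V \<subseteq> S)"
      using o unfolding S_def[symmetric] by (simp only: openin_prod_topology_alt)
    then obtain A B where AB: "openin Z A" "openin (Y i) B" "z \<in> A" "y \<in> B"
      "A \<times> B \<subseteq> S"
      using zy by meson
    have B': "openin (sum_topology Y I) ((\<lambda>y. (i, y)) ` B)"
    proof -
      have "open_map (Y i) (sum_topology Y I) (\<lambda>y. (i, y))"
        by (rule open_map_component_injection[OF p(2)])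
      then show ?thesis using AB(2) unfolding open_map_def by blast
    qed
    show "\<exists>A B. openin Z A \<and> openin (sum_topology Y I) B \<and> z \<in> A \<and> p \<in> B \<and>
        A \<times> B \<subseteq> {x \<in> topspace (prod_topology Z (sum_topology Y I)). f x \<in> U}"
    proof (intro exI[of _ A] exI[of _ "(\<lambda>y. (i, y)) ` B"] conjI)
      show "A \<times> (\<lambda>y. (i, y)) ` B \<subseteq> {x \<in> topspace (prod_topology Z (sum_topology Y I)). f x \<in> U}"
      proof
        fix w assume "w \<in> A \<times> (\<lambda>y. (i, y)) ` B"
        then obtain a b where w: "w = (a, (i, b))" "a \<in> A" "b \<in> B" by blast
        then have "(a, b) \<in> {x \<in> topspace (prod_topology Z (Y i)). f (fst x, (i, snd x)) \<in> U}"
          using AB(5) unfolding S_def by blast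
        then show "w \<in> {x \<in> topspace (prod_topology Z (sum_topology Y I)). f x \<in> U}"
          using w(1) p(2) by simp
      qed
      show "p \<in> (\<lambda>y. (i, y)) ` B" using p(1) AB(4) by blast
    qed (rule AB(1), rule B', rule AB(3))
  qed
qed

lemma lift_ex:
  assumes "quotient_map X Y f" "continuous_map X Z h"
    "\<And>x y. x \<in> topspace X \<Longrightarrow> y \<in> topspace X \<Longrightarrow> f x = f y \<Longrightarrow> h x = h y"
  shows "\<exists>g. continuous_map Y Z g \<and> (\<forall>x\<in>topspace X. g (f x) = h x)"
proof (rule quotient_map_lift_exists[OF assms])
  fix g assume g: "continuous_map Y Z g" "g ` topspace Y = h ` topspace X"
    "\<And>x. x \<in> topspace X \<Longrightarrow> g (f x) = h x"
  show "\<exists>g. continuous_map Y Z g \<and> (\<forall>x\<in>topspace X. g (f x) = h x)"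
    using g(1,3) by blast
qed

theorem mainTheorem10:
  fixes Gr :: "nat \<Rightarrow> 'g monoid"
    and act :: "nat \<Rightarrow> nat \<Rightarrow> (nat \<Rightarrow> nat) \<Rightarrow> 'g \<Rightarrow> 'g"
  assumes "simplicial_group Gr act"
  shows "contractible_space (realization (dummy_simplices Gr act) dummy_act)"
proof -
  define X where "X = dummy_simplices Gr act"
  define pre where "pre = realization_pre X"
  define R where "R = realization_rel X dummy_act"
  define cls where "cls = (\<lambda>p. {q \<in> topspace pre. equivclp R p q})"
  define Rl where "Rl = quotient_topology pre cls"
  have real_eq: "realization (dummy_simplices Gr act) dummy_act = Rl"
    by (simp add: realization_def Rl_def cls_def pre_def R_def X_def)
  define h where "h = (\<lambda>s (p::nat \<times> ((nat \<Rightarrow> (nat \<Rightarrow> nat option) \<Rightarrow> 'g) \<times> (nat \<Rightarrow> real))).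
        (Suc (fst p), (Eext (fst p) (fst (snd p)), cst s (snd (snd p)))))"
  have tsp: "topspace pre = Sigma UNIV (\<lambda>n. X n \<times> standard_simplex n)"
  proof -
    have u: "topspace (powertop_real UNIV) = UNIV" by simp
    show ?thesis unfolding pre_def realization_pre_def topspace_sum_topology o_def topspace_prod_topology
      topspace_discrete_topology topspace_subtopology u by simp
  qed
  have EX: "Eext n x \<in> X (Suc n)" if "x \<in> X n" for x n
    using Eext_in that by (simp add: X_def)
  have hR: "R (h s p) (h s q)" if "R p q" "0 \<le> s" "s \<le> 1" for p q s
  proof -
    from that(1) obtain m n \<theta> x t where w: "\<theta> \<in> mono_maps m n" "x \<in> X n" "t \<in> standard_simplex m"
      "p = (m, dummy_act m n \<theta> x, t)" "q = (n, x, simplex_push m \<theta> t)"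
      unfolding R_def realization_rel_def by blast
    show ?thesis
      unfolding R_def realization_rel_def
      apply (rule exI[of _ "Suc m"], rule exI[of _ "Suc n"], rule exI[of _ "liftm m \<theta>"],
             rule exI[of _ "Eext n x"], rule exI[of _ "cst s t"])
      using w that(2,3)
      by (simp add: h_def liftm_mono EX cst_simplex act_Eext push_lift)
  qed
  have hE: "equivclp R (h s p) (h s q)" if "equivclp R p q" "0 \<le> s" "s \<le> 1" for p q s
    using that(1) unfolding equivclp_def
  proof (induction rule: rtranclp_induct)
    case base then show ?case by simp
  next
    case (step y z)
    from step(2) have "R y z \<or> R z y" by (simp add: symclp_def)
    then have "symclp R (h s y) (h s z)"
      using hR[OF _ that(2,3)] by (meson symclpI1 symclpI2)
    then show ?case using step(3) by (rule rtranclp.rtrancl_into_rtrancl[rotated])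
  qed
  have cls_eq: "cls p = cls q" if "equivclp R p q" for p q
  proof -
    have "equivclp R p r \<longleftrightarrow> equivclp R q r" for r
      using that equivclp_sym[of R] equivclp_trans[of R] by blast
    then show ?thesis unfolding cls_def by simp
  qed
  have hsp: "h s p \<in> topspace pre" if "p \<in> topspace pre" "0 \<le> s" "s \<le> 1" for p s
  proof -
    obtain n x t where p: "p = (n, x, t)" by (rule prod_cases3)
    have xt: "x \<in> X n" "t \<in> standard_simplex n" using that(1) unfolding tsp p by auto
    show ?thesis unfolding tsp p h_def using EX[OF xt(1)] cst_simplex[OF xt(2) that(2,3)] by simp
  qed
  have Q: "quotient_map pre Rl cls"
    unfolding Rl_def by (rule quotient_map_qt)
  define I where "I = top_of_set {0..1::real}"
  have Q2: "quotient_map (prod_topology I pre) (prod_topology I Rl) (\<lambda>(s,p). (s, cls p))"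
  proof (rule quotient_map_prod_right[OF _ _ Q])
    show "locally_compact_space I"
      unfolding I_def by (simp add: compact_imp_locally_compact_space compact_space_subtopology)
    show "Hausdorff_space I \<or> regular_space I"
      unfolding I_def by (simp add: Hausdorff_space_subtopology)
  qed
  define G where "G = (\<lambda>sp. cls (h (fst sp) (snd sp)))"
  have Gc: "continuous_map (prod_topology I pre) Rl G"
    unfolding pre_def realization_pre_def
  proof (rule cont_prod_sum)
    fix n :: nat
    show "continuous_map (prod_topology I (prod_topology (discrete_topology (X n))
             (subtopology (powertop_real UNIV) (standard_simplex n)))) Rl
           (\<lambda>zy. G (fst zy, n, snd zy))" (is "continuous_map ?P Rl _")
    proof -
      have c1: "continuous_map ?P (discrete_topology (X (Suc n))) (\<lambda>zy. Eext n (fst (snd zy)))"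
      proof -
        have "continuous_map ?P (discrete_topology (X n)) (fst \<circ> snd)"
          by (rule continuous_map_compose[OF continuous_map_snd continuous_map_fst])
        moreover have "continuous_map (discrete_topology (X n)) (discrete_topology (X (Suc n))) (Eext n)"
          by (simp add: Pi_iff EX)
        ultimately have "continuous_map ?P (discrete_topology (X (Suc n))) (Eext n \<circ> (fst \<circ> snd))"
          by (rule continuous_map_compose)
        then show ?thesis by (simp add: comp_def)
      qed
      have pr: "continuous_map ?P (powertop_real UNIV) (snd \<circ> snd)"
        by (rule continuous_map_into_fulltopology,
            rule continuous_map_compose[OF continuous_map_snd continuous_map_snd])
      have fs: "continuous_map ?P euclideanreal fst"
        by (rule continuous_map_into_fulltopology[of _ _ "{0..1::real}"])
           (simp add: I_def continuous_map_fst)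
      have cj: "continuous_map ?P euclideanreal (\<lambda>zy. snd (snd zy) j)" for j
      proof -
        have "continuous_map (powertop_real UNIV) euclideanreal (\<lambda>x. x j)"
          using continuous_map_product_projection[of j UNIV "\<lambda>_. euclideanreal"] by simp
        then have "continuous_map ?P euclideanreal ((\<lambda>x. x j) \<circ> (snd \<circ> snd))"
          by (rule continuous_map_compose[OF pr])
        then show ?thesis by (simp add: comp_def)
      qed
      have c2a: "continuous_map ?P (powertop_real UNIV) (\<lambda>zy. cst (fst zy) (snd (snd zy)))"
        unfolding continuous_map_componentwise_UNIV
      proof
        fix j :: nat
        show "continuous_map ?P euclideanreal (\<lambda>zy. cst (fst zy) (snd (snd zy)) j)"
        proof (cases "j = 0")
          case True then show ?thesis using fs by (simp add: cst_def)
        next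
          case False
          have "continuous_map ?P euclideanreal (\<lambda>zy. (1 - fst zy) * snd (snd zy) (j - 1))"
            by (intro continuous_map_real_mult continuous_map_diff continuous_map_canonical_const fs cj)
          then show ?thesis using False by (simp add: cst_def)
        qed
      qed
      have c2: "continuous_map ?P (subtopology (powertop_real UNIV) (standard_simplex (Suc n)))
                  (\<lambda>zy. cst (fst zy) (snd (snd zy)))"
        unfolding continuous_map_in_subtopology
      proof (intro conjI c2a Pi_I)
        fix zy assume "zy \<in> topspace ?P"
        then have "fst zy \<in> {0..1}" "snd (snd zy) \<in> standard_simplex n"
          unfolding I_def topspace_prod_topology topspace_subtopology mem_Times_iff by auto
        then show "cst (fst zy) (snd (snd zy)) \<in> standard_simplex (Suc n)"
          using cst_simplex by auto
      qed
      have k2: "continuous_map ?P (prod_topology (discrete_topology (X (Suc n)))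
                  (subtopology (powertop_real UNIV) (standard_simplex (Suc n))))
                (\<lambda>zy. (Eext n (fst (snd zy)), cst (fst zy) (snd (snd zy))))"
        using c1 c2 by (simp add: continuous_map_paired)
      have inj: "continuous_map (prod_topology (discrete_topology (X (Suc n)))
                  (subtopology (powertop_real UNIV) (standard_simplex (Suc n)))) pre (\<lambda>w. (Suc n, w))"
        unfolding pre_def realization_pre_def
        using continuous_map_component_injection[of "Suc n" UNIV
          "\<lambda>n. prod_topology (discrete_topology (X n)) (subtopology (powertop_real UNIV) (standard_simplex n))"]
        by simp
      have cq: "continuous_map pre Rl cls"
        by (rule quotient_imp_continuous_map[OF Q])
      have "continuous_map ?P Rl (cls \<circ> (\<lambda>w. (Suc n, w)) \<circ> (\<lambda>zy. (Eext n (fst (snd zy)), cst (fst zy) (snd (snd zy)))))"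
        by (rule continuous_map_compose[OF k2 continuous_map_compose[OF inj cq]])
      moreover have "(cls \<circ> (\<lambda>w. (Suc n, w)) \<circ> (\<lambda>zy. (Eext n (fst (snd zy)), cst (fst zy) (snd (snd zy)))))
          = (\<lambda>zy. G (fst zy, n, snd zy))"
        by (simp add: fun_eq_iff G_def h_def)
      ultimately show ?thesis by simp
    qed
  qed
  have Gw: "G x = G y" if "x \<in> topspace (prod_topology I pre)" "y \<in> topspace (prod_topology I pre)"
     "(\<lambda>(s,p). (s, cls p)) x = (\<lambda>(s,p). (s, cls p)) y" for x y
  proof -
    obtain s p where x: "x = (s, p)" by (cases x)
    obtain s' p' where y: "y = (s', p')" by (cases y)
    have sp: "s \<in> {0..1}" "p \<in> topspace pre" using that(1) x by (auto simp: I_def)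
    have eq: "s' = s" "cls p' = cls p" using that(3) x y by auto
    have "p \<in> cls p" using sp(2) by (simp add: cls_def)
    then have "p \<in> cls p'" using eq by simp
    then have "equivclp R p' p" by (simp add: cls_def)
    then have "equivclp R (h s p') (h s p)" using hE sp(1) by auto
    then have "cls (h s p') = cls (h s p)" by (rule cls_eq)
    then show ?thesis using x y eq by (simp add: G_def)
  qed
  obtain g where g: "continuous_map (prod_topology I Rl) Rl g"
    "\<forall>x\<in>topspace (prod_topology I pre). g ((\<lambda>(s,p). (s, cls p)) x) = G x"
    using lift_ex[OF Q2 Gc Gw] by blast
  define a where "a = cls (0, cpt Gr, e0)"
  have "homotopic_with (\<lambda>x. True) Rl Rl id (\<lambda>x. a)"
  proof (subst homotopic_with)
    show "\<exists>h. continuous_map (prod_topology (top_of_set {0..1::real}) Rl) Rl h \<and>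
        (\<forall>x\<in>topspace Rl. h (0, x) = id x) \<and> (\<forall>x\<in>topspace Rl. h (1, x) = a) \<and>
        (\<forall>t\<in>{0..1}. True)"
    proof (intro exI conjI ballI)
      show "continuous_map (prod_topology (top_of_set {0..1::real}) Rl) Rl g"
        using g(1) by (simp add: I_def)
      fix C assume "C \<in> topspace Rl"
      then obtain p where p: "p \<in> topspace pre" "C = cls p"
        unfolding Rl_def qt_topspace by blast
      obtain n x t where pe: "p = (n, x, t)" by (rule prod_cases3)
      have xt: "x \<in> X n" "t \<in> standard_simplex n" using p(1) unfolding tsp pe by auto
      have xd: "x \<in> dummy_simplices Gr act n" using xt(1) by (simp add: X_def)
      have t0: "(0, p) \<in> topspace (prod_topology I pre)" "(1, p) \<in> topspace (prod_topology I pre)"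
        using p(1) by (auto simp: I_def)
      have g0: "g (0, C) = G (0, p)" using g(2) t0(1) p(2) by fastforce
      have g1: "g (1, C) = G (1, p)" using g(2) t0(2) p(2) by fastforce
      have R0: "R p (h 0 p)"
        unfolding R_def realization_rel_def
        apply (rule exI[of _ n], rule exI[of _ "Suc n"], rule exI[of _ "face0 n"],
               rule exI[of _ "Eext n x"], rule exI[of _ t])
        using xt face0_mono EX[OF xt(1)] face0_act[OF xd] push_face0[OF xt(2)]
        by (simp add: pe h_def)
      have R1: "R (0, cpt Gr, e0) (h 1 p)"
        unfolding R_def realization_rel_def
        apply (rule exI[of _ 0], rule exI[of _ "Suc n"], rule exI[of _ vert0],
               rule exI[of _ "Eext n x"], rule exI[of _ e0])
        using vert0_mono EX[OF xt(1)] vert0_act[OF xd] push_vert0[of t] e0_simplex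
        by (simp add: pe h_def)
      show "g (0, C) = id C"
        using g0 cls_eq[OF r_into_equivclp[of R, OF R0]] p(2) by (simp add: G_def)
      show "g (1, C) = a"
        using g1 cls_eq[OF r_into_equivclp[of R, OF R1]] by (simp add: G_def a_def)
    qed simp
  qed simp
  then show ?thesis
    unfolding real_eq contractible_space_def by blast
qed

end
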